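(* Let $\alpha>1$ and let $A=1+\left(\frac{2}{2\alpha-1}\right)^{2\alpha-1}\alpha^\alpha(\alpha-1)^{\alpha-1}$. Then the norm of the Ces\`aro operator on the $\alpha$-Bloch space satisfies $$\|\mathcal{C}\|_{\mathcal{B}^\alpha\to\mathcal{B}^\alpha}\le\begin{cases}\max\left\{A,\dfrac{2^\alpha}{\alpha-1}\right\}, & 1<\alpha\le 2,\\[1em] \max\left\{A,\,2^\alpha\dfrac{2^\alpha-\alpha-1}{(\alpha-1)^2}\right\}, & \alpha>2.\end{cases}$$
   Context: $\mathbb{D}$ is the open unit disc and $H(\mathbb{D})$ the space of analytic functions on $\mathbb{D}$. For $f(z)=\sum_{k\ge0}a_kz^k\in H(\mathbb{D})$ the Ces\`aro operator is $\mathcal{C}(f)(z)=\sum_{n\ge0}\Big(\frac{1}{n+1}\sum_{k=0}^n a_k\Big)z^n=\int_0^1\frac{f(tz)}{1-tz}\,dt$. For $\alpha>0$ the $\alpha$-Bloch space $\mathcal{B}^\alpha$ consists of $f\in H(\mathbb{D})$ with $\sup_{z\in\mathbb{D}}(1-|z|^2)^\alpha|f'(z)|<\infty$, normed by $\|f\|_{\mathcal{B}^\alpha}=|f(0)|+\sup_{z\in\mathbb{D}}(1-|z|^2)^\alpha|f'(z)|$. Operator norms are $\|\mathcal{C}\|_{X\to Y}=\sup\{\|\mathcal{C}f\|_Y:\|f\|_X\le 1\}$. *)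

theory Defs
  imports "HOL-Complex_Analysis.Complex_Analysis"
begin

definition cesaro :: "(complex \<Rightarrow> complex) \<Rightarrow> complex \<Rightarrow> complex" where
  "cesaro f z = integral {0..1} (\<lambda>t::real. f (of_real t * z) / (1 - of_real t * z))"

definition bloch_space :: "real \<Rightarrow> (complex \<Rightarrow> complex) set" where
  "bloch_space \<alpha> = {f. f holomorphic_on ball 0 1 \<and>
      bdd_above ((\<lambda>z. (1 - (cmod z)\<^sup>2) powr \<alpha> * cmod (deriv f z)) ` ball 0 1)}"

definition bloch_norm :: "real \<Rightarrow> (complex \<Rightarrow> complex) \<Rightarrow> real" where
  "bloch_norm \<alpha> f = cmod (f 0) + (SUP z\<in>ball 0 1. (1 - (cmod z)\<^sup>2) powr \<alpha> * cmod (deriv f z))"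

definition cesaro_bloch_opnorm :: "real \<Rightarrow> ereal" where
  "cesaro_bloch_opnorm \<alpha> =
     (SUP f\<in>{f\<in>bloch_space \<alpha>. bloch_norm \<alpha> f \<le> 1}.
        (if cesaro f \<in> bloch_space \<alpha> then ereal (bloch_norm \<alpha> (cesaro f)) else \<infinity>))"

end

theory Submission
  imports Defs
begin


lemma two_powr_split: "(2::real) powr a = 2 powr b * exp ((a-b) * ln 2)"
  by (simp add: powr_def flip: exp_add) (simp add: algebra_simps)

lemma two_powr_ge_2a: assumes "(a::real) \<ge> 2" shows "2*a \<le> 2 powr a"
proof -
  have L: "2/3 \<le> ln (2::real)" by (rule ln2_ge_two_thirds)
  define X where "X = (a-2) * ln (2::real)"
  have 1: "2 powr a = 4 * exp X" using two_powr_split[of a 2] X_def by simp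
  have 2: "1 + X \<le> exp X" by (rule exp_ge_add_one_self)
  have L3: "2 \<le> 3 * ln (2::real)" using L by simp
  have 3: "2*a - 4 \<le> 3*X" unfolding X_def using mult_left_mono[OF L3, of "a-2"] assms by (simp add: algebra_simps)
  show ?thesis using 1 2 3 assms by linarith
qed

lemma two_powr_ge_cubic: assumes "(a::real) \<ge> 3" shows "(a-1)^2 + a + 1 \<le> 2 powr a"
proof -
  have L: "2/3 \<le> ln (2::real)" by (rule ln2_ge_two_thirds)
  define t where "t = a - 3"
  have t: "t \<ge> 0" using assms t_def by simp
  define X where "X = t * ln (2::real)"
  have 1: "2 powr a = 8 * exp X" using two_powr_split[of a 3] t_def X_def by simp
  have 2: "1 + X + X^2/2 \<le> exp X"
    by (rule exp_lower_Taylor_quadratic) (use t in \<open>simp add: X_def\<close>)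
  have L3: "2 \<le> 3 * ln (2::real)" using L by simp
  have 3: "2*t \<le> 3*X" unfolding X_def using mult_left_mono[OF L3 t] by (simp add: algebra_simps)
  have 4: "(2*t)^2 \<le> (3*X)^2" using 3 t by (intro power_mono) auto
  have 5: "(a-1)^2 + a + 1 = 8 + 5*t + t^2"
    unfolding t_def by (simp add: power2_eq_square algebra_simps)
  have 6: "(2*t)^2 = 4 * t^2" "(3*X)^2 = 9*X^2" by (simp_all add: power2_eq_square)
  have 7: "0 \<le> t^2" by simp
  show ?thesis using 1 2 3 4 5 6 7 t by linarith
qed



lemma bern_ge1:
  fixes p r :: real assumes p: "p \<ge> 1" and r: "0 \<le> r" "r < 1"
  shows "1 - p * r \<le> (1 - r) powr p"
proof -
  have pos: "0 < (1 - r) powr p" using r by simp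
  have "((1 - r) powr p) powr (1/p) * 1 powr (1 - 1/p) \<le> (1/p) * (1 - r) powr p + (1 - 1/p) * 1"
    by (rule Youngs_inequality_0) (use p pos in auto)
  moreover have "((1 - r) powr p) powr (1/p) = 1 - r" using p r by (simp add: powr_powr)
  ultimately have "1 - r \<le> (1/p) * (1 - r) powr p + (1 - 1/p)" by simp
  hence "p * (1 - r) \<le> p * ((1/p) * (1 - r) powr p + (1 - 1/p))" using p by simp
  also have "\<dots> = (1 - r) powr p + p - 1" using p by (simp add: algebra_simps)
  finally show ?thesis by (simp add: algebra_simps)
qed

lemma amgm_bound:
  fixes a r :: real assumes a: "a > 1" and r: "0 \<le> r" "r < 1"
  shows "(1 + r) powr a * (1 - r) powr (a - 1) \<le>
         (2 / (2*a - 1)) powr (2*a - 1) * a powr a * (a - 1) powr (a - 1)"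
proof -
  define p where "p = a / (2*a-1)"
  define q where "q = (a-1) / (2*a-1)"
  have d: "2*a - 1 > 0" using a by simp
  have pq: "p > 0" "q > 0" "p + q = 1" using a d unfolding p_def q_def
    by (simp_all add: add_divide_distrib[symmetric])
  define u where "u = (1 + r) / (2*p)"
  define v where "v = (1 - r) / (2*q)"
  have uv: "u > 0" "v > 0" using pq r unfolding u_def v_def by auto
  have "u powr p * v powr q \<le> p * u + q * v"
    by (rule Youngs_inequality_0) (use pq uv in auto)
  also have "p * u + q * v = 1" using pq unfolding u_def v_def by (simp add: field_simps)
  finally have le1: "u powr p * v powr q \<le> 1" .
  have "(u powr p * v powr q) powr (2*a - 1) \<le> 1"
    by (rule powr_le1) (use le1 d in auto)
  also have "(u powr p * v powr q) powr (2*a - 1) = u powr a * v powr (a - 1)"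
    using d by (simp add: powr_mult powr_powr p_def q_def)
  finally have uv1: "u powr a * v powr (a - 1) \<le> 1" .
  have "u powr a * v powr (a - 1) = (1 + r) powr a * (1 - r) powr (a - 1) / ((2*p) powr a * (2*q) powr (a-1))"
    unfolding u_def v_def by (simp add: powr_divide)
  moreover have "(2*p) powr a * (2*q) powr (a-1) > 0" using pq by simp
  ultimately have "(1 + r) powr a * (1 - r) powr (a - 1) \<le> (2*p) powr a * (2*q) powr (a-1)"
    using uv1 by (simp add: divide_le_eq)
  also have "\<dots> = (2 / (2*a - 1)) powr (2*a - 1) * a powr a * (a - 1) powr (a - 1)"
  proof -
    have "(2*p) powr a = (2 / (2*a - 1)) powr a * a powr a"
      unfolding p_def by (simp add: powr_mult[symmetric])
    moreover have "(2*q) powr (a-1) = (2 / (2*a - 1)) powr (a-1) * (a-1) powr (a-1)"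
      unfolding q_def by (simp add: powr_mult[symmetric])
    moreover have "(2 / (2*a - 1)) powr a * (2 / (2*a - 1)) powr (a-1) = (2 / (2*a - 1)) powr (2*a - 1)"
      by (simp add: powr_add[symmetric])
    ultimately show ?thesis by (simp add: algebra_simps)
  qed
  finally show ?thesis .
qed

definition Bc :: "real \<Rightarrow> real" where
  "Bc a = (if a \<le> 2 then 2 powr a / (a - 1) else 2 powr a * (2 powr a - a - 1) / (a - 1)\<^sup>2)"

lemma Q_bound:
  fixes a r :: real assumes a: "a > 1" and r: "0 < r" "r < 1"
  shows "(1 + r) powr a * (1 - (1 - r) powr (a - 1)) / ((a - 1) * r) \<le> Bc a"
proof -
  have x: "0 < 1 - r" "1 - r \<le> 1" using r by auto
  have a1: "a - 1 > 0" using a by simp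
  have P: "(1 + r) powr a \<le> 2 powr a" using r a by (intro powr_mono2) auto
  have Ppos: "0 \<le> (1 + r) powr a" by simp
  consider "a \<le> 2" | "2 < a" "a \<le> 3" | "3 < a" by linarith
  then show ?thesis
  proof cases
    case 1
    have "(1 - r) powr 1 \<le> (1 - r) powr (a - 1)" by (rule powr_mono') (use 1 x in auto)
    hence "1 - (1 - r) powr (a - 1) \<le> r" using x by simp
    moreover have "(1 - r) powr (a - 1) \<le> 1" using x a1 by (intro powr_le1) auto
    ultimately have "(1 + r) powr a * (1 - (1 - r) powr (a - 1)) \<le> 2 powr a * r"
      using P Ppos r by (intro mult_mono) auto
    hence "(1 + r) powr a * (1 - (1 - r) powr (a - 1)) / ((a - 1) * r) \<le> 2 powr a * r / ((a - 1) * r)"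
      using a1 r by (intro divide_right_mono) auto
    also have "\<dots> = Bc a" using 1 r unfolding Bc_def by simp
    finally show ?thesis .
  next
    case 2
    have "(1 - r) powr 2 \<le> (1 - r) powr (a - 1)" by (rule powr_mono') (use 2 x in auto)
    hence "1 - (1 - r) powr (a - 1) \<le> r * (2 - r)" using x by (simp add: power2_eq_square algebra_simps)
    hence "(1 + r) powr a * (1 - (1 - r) powr (a - 1)) \<le> (1 + r) powr a * (r * (2 - r))"
      using Ppos by (intro mult_left_mono) auto
    also have "\<dots> \<le> 2 powr a * r"
    proof -
      have g1: "1 \<le> 2 / (1 + r)" using r by (simp add: field_simps)
      have "(2 / (1 + r)) powr 2 \<le> (2 / (1 + r)) powr a" by (rule powr_mono) (use 2 g1 in auto)
      moreover have "(2 / (1 + r)) powr 2 = 4 / (1 + r)^2" using r by (simp add: power2_eq_square)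
      moreover have "2 - r \<le> 4 / (1 + r)^2"
      proof -
        have e: "4 - (2 - r) * (1 + r)^2 = (1 - r)^2 * (2 + r)"
          by (simp add: power2_eq_square algebra_simps)
        have "0 \<le> (1 - r)^2 * (2 + r)" using r by simp
        hence "(2 - r) * (1 + r)^2 \<le> 4" using e by linarith
        thus ?thesis using r by (simp add: field_simps)
      qed
      ultimately have "2 - r \<le> (2 / (1 + r)) powr a" by linarith
      hence "(1 + r) powr a * (2 - r) \<le> (1 + r) powr a * (2 / (1 + r)) powr a"
        using Ppos by (intro mult_left_mono) auto
      also have "\<dots> = 2 powr a" using r by (simp add: powr_divide)
      finally have "(1 + r) powr a * (2 - r) \<le> 2 powr a" .
      hence "(1 + r) powr a * (2 - r) * r \<le> 2 powr a * r" using r by (intro mult_right_mono) auto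
      thus ?thesis by (simp add: algebra_simps)
    qed
    finally have "(1 + r) powr a * (1 - (1 - r) powr (a - 1)) / ((a - 1) * r) \<le> 2 powr a * r / ((a - 1) * r)"
      using a1 r by (intro divide_right_mono) auto
    also have "\<dots> = 2 powr a / (a - 1)" using r by simp
    also have "\<dots> \<le> 2 powr a * (2 powr a - a - 1) / (a - 1)\<^sup>2"
    proof -
      have "2*a \<le> 2 powr a" using 2 by (intro two_powr_ge_2a) auto
      hence "a - 1 \<le> 2 powr a - a - 1" by simp
      hence "2 powr a * (a - 1) \<le> 2 powr a * (2 powr a - a - 1)" by (intro mult_left_mono) auto
      hence "2 powr a * (a - 1) / (a - 1)^2 \<le> 2 powr a * (2 powr a - a - 1) / (a - 1)^2"
        by (rule divide_right_mono) auto
      moreover have "2 powr a * (a - 1) / (a - 1)^2 = 2 powr a / (a - 1)" using a1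
        by (simp add: power2_eq_square)
      ultimately show ?thesis by simp
    qed
    also have "\<dots> = Bc a" using 2 unfolding Bc_def by simp
    finally show ?thesis .
  next
    case 3
    have "1 - (a - 1) * r \<le> (1 - r) powr (a - 1)" by (rule bern_ge1) (use 3 r in auto)
    hence "1 - (1 - r) powr (a - 1) \<le> (a - 1) * r" by simp
    moreover have "(1 - r) powr (a - 1) \<le> 1" using x a1 by (intro powr_le1) auto
    ultimately have "(1 + r) powr a * (1 - (1 - r) powr (a - 1)) \<le> 2 powr a * ((a - 1) * r)"
      using P Ppos r a1 by (intro mult_mono) auto
    hence "(1 + r) powr a * (1 - (1 - r) powr (a - 1)) / ((a - 1) * r) \<le> 2 powr a * ((a - 1) * r) / ((a - 1) * r)"
      using a1 r by (intro divide_right_mono) auto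
    also have "\<dots> = 2 powr a" using a1 r by simp
    also have "\<dots> \<le> 2 powr a * (2 powr a - a - 1) / (a - 1)\<^sup>2"
    proof -
      have "(a-1)^2 + a + 1 \<le> 2 powr a" using 3 by (intro two_powr_ge_cubic) auto
      hence "(a - 1)^2 \<le> 2 powr a - a - 1" by simp
      hence "2 powr a * (a - 1)^2 \<le> 2 powr a * (2 powr a - a - 1)" by (intro mult_left_mono) auto
      hence "2 powr a * (a - 1)^2 / (a - 1)^2 \<le> 2 powr a * (2 powr a - a - 1) / (a - 1)^2"
        by (rule divide_right_mono) auto
      thus ?thesis using a1 by simp
    qed
    also have "\<dots> = Bc a" using 3 unfolding Bc_def by simp
    finally show ?thesis .
  qed
qed



lemma norm_integral_le_antideriv:
  fixes g :: "real \<Rightarrow> complex" and G G' :: "real \<Rightarrow> real"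
  assumes "g integrable_on {0..1}"
    and "\<And>t. t \<in> {0..1} \<Longrightarrow> norm (g t) \<le> G' t"
    and "\<And>t. t \<in> {0..1} \<Longrightarrow> (G has_real_derivative G' t) (at t within {0..1})"
  shows "norm (integral {0..1} g) \<le> G 1 - G 0"
proof -
  have "(G' has_integral (G 1 - G 0)) {0..1}"
    by (rule fundamental_theorem_of_calculus)
       (use assms(3) in \<open>auto simp: has_real_derivative_iff_has_vector_derivative\<close>)
  hence "G' integrable_on {0..1}" "integral {0..1} G' = G 1 - G 0"
    by (auto simp: has_integral_iff)
  moreover have "norm (integral {0..1} g) \<le> integral {0..1} G'"
    by (rule integral_norm_bound_integral) (use assms calculation in auto)
  ultimately show ?thesis by simp
qed

lemma cesaro_has_deriv:
  fixes f :: "complex \<Rightarrow> complex" and z :: complex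
  assumes hol: "f holomorphic_on ball 0 1" and z: "z \<in> ball 0 1"
  shows "(cesaro f has_field_derivative
           integral {0..1} (\<lambda>t. of_real t * deriv (\<lambda>w. f w / (1 - w)) (of_real t * z))) (at z)"
proof -
  define h where "h = (\<lambda>w. f w / (1 - w))"
  have hh: "h holomorphic_on ball 0 1"
    unfolding h_def by (intro holomorphic_intros hol) (auto simp: dist_norm)
  have mem: "of_real t * x \<in> ball 0 1" if "(x::complex) \<in> ball 0 1" "t \<in> cbox 0 (1::real)" for x t
  proof -
    have "norm (of_real t * x) = \<bar>t\<bar> * norm x" by (simp add: norm_mult)
    also have "\<dots> \<le> norm x" using that by (auto intro: mult_left_le_one_le)
    finally show ?thesis using that by auto
  qed
  have ceq: "cesaro f = (\<lambda>x. integral (cbox 0 1) (\<lambda>t. h (of_real t * x)))"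
    by (auto simp: cesaro_def h_def fun_eq_iff)
  have "((\<lambda>x. integral (cbox 0 1) (\<lambda>t. h (of_real t * x))) has_field_derivative
          integral (cbox 0 1) (\<lambda>t. of_real t * deriv h (of_real t * z))) (at z within ball 0 1)"
  proof (rule leibniz_rule_field_derivative)
    fix x t assume x: "(x::complex) \<in> ball 0 1" and t: "t \<in> cbox 0 (1::real)"
    have "(h has_field_derivative deriv h (of_real t * x)) (at (of_real t * x))"
      by (rule holomorphic_derivI[OF hh]) (use mem[OF x t] in auto)
    moreover have "((\<lambda>x. of_real t * x) has_field_derivative of_real t) (at x within ball 0 1)"
      by (auto intro!: derivative_eq_intros)
    ultimately have "((\<lambda>x. h (of_real t * x)) has_field_derivative deriv h (of_real t * x) * of_real t) (at x within ball 0 1)"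
      by (rule DERIV_chain2)
    thus "((\<lambda>x. h (of_real t * x)) has_field_derivative of_real t * deriv h (of_real t * x)) (at x within ball 0 1)"
      by (simp add: mult.commute)
  next
    fix x assume x: "(x::complex) \<in> ball 0 1"
    have "continuous_on {0..1} (\<lambda>t::real. h (of_real t * x))"
      by (rule continuous_on_compose2[OF holomorphic_on_imp_continuous_on[OF hh]])
         (use mem[OF x] in \<open>auto intro!: continuous_intros\<close>)
    thus "(\<lambda>t. h (of_real t * x)) integrable_on cbox 0 1"
      by (auto intro: integrable_continuous_interval)
  next
    have dh: "deriv h holomorphic_on ball 0 1" by (rule holomorphic_deriv[OF hh]) auto
    have "continuous_on (ball 0 1 \<times> cbox 0 1) (\<lambda>p. deriv h (of_real (snd p) * fst p))"
      by (rule continuous_on_compose2[OF holomorphic_on_imp_continuous_on[OF dh]])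
         (use mem in \<open>auto intro!: continuous_intros\<close>)
    hence "continuous_on (ball 0 1 \<times> cbox 0 1) (\<lambda>p. of_real (snd p) * deriv h (of_real (snd p) * fst p))"
      by (intro continuous_intros) auto
    thus "continuous_on (ball 0 1 \<times> cbox 0 1) (\<lambda>(x, t). of_real t * deriv h (of_real t * x))"
      by (simp add: case_prod_beta)
  qed (use z in auto)
  moreover have "at z within ball 0 1 = at z" by (rule at_within_open[OF z]) simp
  ultimately show ?thesis unfolding ceq h_def cbox_interval by simp
qed



lemma deriv_pt_bound:
  fixes f :: "complex \<Rightarrow> complex" and a M :: real and w :: complex
  assumes a: "a > 1"
    and B: "\<And>w. w \<in> ball 0 1 \<Longrightarrow> (1 - (cmod w)\<^sup>2) powr a * cmod (deriv f w) \<le> M"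
    and w: "w \<in> ball 0 1"
  shows "cmod (deriv f w) \<le> M * (1 - cmod w) powr (-a)"
proof -
  have w1: "cmod w < 1" using w by simp
  have "(1 - cmod w) powr a \<le> (1 - (cmod w)\<^sup>2) powr a"
    using w1 a by (intro powr_mono2) (auto simp: power2_eq_square mult_left_le_one_le)
  hence "(1 - cmod w) powr a * cmod (deriv f w) \<le> M"
    using B[OF w] by (meson mult_right_mono norm_ge_zero order_trans)
  moreover have "(1 - cmod w) powr a > 0" using w1 by simp
  ultimately have "cmod (deriv f w) \<le> M / (1 - cmod w) powr a"
    by (simp add: le_divide_eq mult.commute)
  thus ?thesis by (simp add: powr_minus_divide)
qed

lemma f_pt_bound:
  fixes f :: "complex \<Rightarrow> complex" and a M :: real and w :: complex
  assumes hol: "f holomorphic_on ball 0 1" and a: "a > 1"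
    and B: "\<And>w. w \<in> ball 0 1 \<Longrightarrow> (1 - (cmod w)\<^sup>2) powr a * cmod (deriv f w) \<le> M"
    and w: "w \<in> ball 0 1"
  shows "cmod (f w) \<le> cmod (f 0) + M * (((1 - cmod w) powr (1 - a) - 1) / (a - 1))"
proof -
  define \<rho> where "\<rho> = cmod w"
  have \<rho>: "0 \<le> \<rho>" "\<rho> < 1" using w by (auto simp: \<rho>_def)
  have mem: "of_real s * w \<in> ball 0 1" if "s \<in> {0..1::real}" for s
  proof -
    have "norm (of_real s * w) = \<bar>s\<bar> * norm w" by (simp add: norm_mult)
    also have "\<dots> \<le> norm w" using that by (auto intro: mult_left_le_one_le)
    finally show ?thesis using w by auto
  qed
  have vd: "((\<lambda>s. f (of_real s * w)) has_vector_derivative deriv f (of_real s * w) * w) (at s within {0..1})"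
    if s: "s \<in> {0..1}" for s
  proof -
    have "(f has_field_derivative deriv f (of_real s * w)) (at (of_real s * w))"
      by (rule holomorphic_derivI[OF hol]) (use mem[OF s] in auto)
    moreover have "((\<lambda>\<zeta>. \<zeta> * w) has_field_derivative w) (at (of_real s))"
      by (auto intro!: derivative_eq_intros)
    ultimately have "((\<lambda>\<zeta>. f (\<zeta> * w)) has_field_derivative deriv f (of_real s * w) * w) (at (of_real s))"
      by (rule DERIV_chain2)
    thus ?thesis by (rule has_vector_derivative_real_field)
  qed
  have "((\<lambda>s. deriv f (of_real s * w) * w) has_integral (f (of_real 1 * w) - f (of_real 0 * w))) {0..1}"
    by (rule fundamental_theorem_of_calculus) (use vd in auto)
  hence I: "((\<lambda>s. deriv f (of_real s * w) * w) has_integral (f w - f 0)) {0..1}" by simp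
  define G where "G = (\<lambda>s::real. M * (1 - s * \<rho>) powr (1 - a) / (a - 1))"
  define G' where "G' = (\<lambda>s::real. M * \<rho> * (1 - s * \<rho>) powr (- a))"
  have "norm (integral {0..1} (\<lambda>s. deriv f (of_real s * w) * w)) \<le> G 1 - G 0"
  proof (rule norm_integral_le_antideriv)
    show "(\<lambda>s. deriv f (of_real s * w) * w) integrable_on {0..1}" using I by blast
  next
    fix s :: real assume s: "s \<in> {0..1}"
    have ns: "cmod (of_real s * w) = s * \<rho>" using s by (simp add: norm_mult \<rho>_def)
    have "cmod (deriv f (of_real s * w) * w) = cmod (deriv f (of_real s * w)) * \<rho>"
      by (simp add: norm_mult \<rho>_def)
    also have "\<dots> \<le> M * (1 - s * \<rho>) powr (-a) * \<rho>"
      using deriv_pt_bound[OF a B mem[OF s]] ns \<rho> by (intro mult_right_mono) auto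
    finally show "cmod (deriv f (of_real s * w) * w) \<le> G' s" by (simp add: G'_def algebra_simps)
  next
    fix s :: real assume s: "s \<in> {0..1}"
    have pos: "0 < 1 - s * \<rho>" using s \<rho> by (smt (verit) mult_left_le_one_le atLeastAtMost_iff)
    have "((\<lambda>x. x powr (1 - a)) has_real_derivative (1 - a) * (1 - s * \<rho>) powr (1 - a - 1)) (at (1 - s * \<rho>))"
      by (rule has_real_derivative_powr[OF pos])
    moreover have "((\<lambda>s. 1 - s * \<rho>) has_real_derivative - \<rho>) (at s within {0..1})"
      by (auto intro!: derivative_eq_intros)
    ultimately have "((\<lambda>s. (1 - s * \<rho>) powr (1 - a)) has_real_derivative (1 - a) * (1 - s * \<rho>) powr (1 - a - 1) * - \<rho>) (at s within {0..1})"
      by (rule DERIV_chain2)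
    hence "(G has_real_derivative M * ((1 - a) * (1 - s * \<rho>) powr (1 - a - 1) * - \<rho>) / (a - 1)) (at s within {0..1})"
      unfolding G_def by (rule DERIV_cdivide[OF DERIV_cmult])
    moreover have "M * ((1 - a) * (1 - s * \<rho>) powr (1 - a - 1) * - \<rho>) / (a - 1) = G' s"
      using a by (simp add: G'_def field_simps)
    ultimately show "(G has_real_derivative G' s) (at s within {0..1})" by simp
  qed
  hence "cmod (f w - f 0) \<le> G 1 - G 0" by (simp only: integral_unique[OF I])
  hence "cmod (f w - f 0) \<le> M * (((1 - cmod w) powr (1 - a) - 1) / (a - 1))"
    by (simp add: G_def \<rho>_def diff_divide_distrib right_diff_distrib)
  thus ?thesis by (smt (verit) norm_triangle_ineq2)
qed



lemma alg_aux0: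
  fixes P Q d k c M :: real
  assumes "d \<noteq> 0" "k \<noteq> 0" "P \<noteq> 0"
  shows "Q * P * (c / d + M / k * (1 / P - 1 / d)) =
         c * (Q * (P / d)) + M * (Q * (1 - P / d) / k)"
  using assms by (simp add: field_simps)

lemma alg_aux:
  fixes P Q r a c M :: real
  assumes "0 < r" "r < 1" "a \<noteq> 1" "P > 0"
  shows "Q * P * (c / (1 - r) + M / ((a - 1) * r) * (1 / P - 1 / (1 - r))) =
         c * (Q * (P / (1 - r))) + M * (Q * (1 - P / (1 - r)) / ((a - 1) * r))"
  by (rule alg_aux0) (use assms in auto)

lemma quot_aux: "(q::complex) \<noteq> 0 \<Longrightarrow> (A * q - B * (- 1)) / (q * q) = A / q + B / q^2"
  by (simp add: field_simps power2_eq_square)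

lemma cesaro_deriv_pt:
  fixes f :: "complex \<Rightarrow> complex" and a M :: real and z :: complex
  assumes hol: "f holomorphic_on ball 0 1" and a: "a > 1"
    and B: "\<And>w. w \<in> ball 0 1 \<Longrightarrow> (1 - (cmod w)\<^sup>2) powr a * cmod (deriv f w) \<le> M"
    and z: "z \<in> ball 0 1" and z0: "z \<noteq> 0"
  shows "(1 - (cmod z)\<^sup>2) powr a * cmod (deriv (cesaro f) z) \<le>
     cmod (f 0) * ((1 + cmod z) powr a * (1 - cmod z) powr (a - 1)) +
     M * ((1 + cmod z) powr a * (1 - (1 - cmod z) powr (a - 1)) / ((a - 1) * cmod z))"
proof -
  define r where "r = cmod z"
  have r: "0 < r" "r < 1" using z z0 by (auto simp: r_def)
  define h where "h = (\<lambda>w. f w / (1 - w))"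
  have hh: "h holomorphic_on ball 0 1"
    unfolding h_def by (intro holomorphic_intros hol) (auto simp: dist_norm)
  have mem: "of_real t * z \<in> ball 0 1" if "t \<in> {0..1::real}" for t
  proof -
    have "norm (of_real t * z) = \<bar>t\<bar> * norm z" by (simp add: norm_mult)
    also have "\<dots> \<le> norm z" using that by (auto intro: mult_left_le_one_le)
    finally show ?thesis using z by auto
  qed
  have dC: "deriv (cesaro f) z = integral {0..1} (\<lambda>t. of_real t * deriv h (of_real t * z))"
    unfolding h_def by (rule DERIV_imp_deriv[OF cesaro_has_deriv[OF hol z]])
  have dh: "deriv h \<zeta> = deriv f \<zeta> / (1 - \<zeta>) + f \<zeta> / (1 - \<zeta>)^2" if "\<zeta> \<in> ball 0 1" for \<zeta>
  proof -
    have ne: "1 - \<zeta> \<noteq> 0" "\<zeta> \<noteq> 1" using that by auto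
    have "(f has_field_derivative deriv f \<zeta>) (at \<zeta>)"
      by (rule holomorphic_derivI[OF hol]) (use that in auto)
    hence "(h has_field_derivative (deriv f \<zeta> * (1 - \<zeta>) - f \<zeta> * (- 1)) / ((1 - \<zeta>) * (1 - \<zeta>))) (at \<zeta>)"
      unfolding h_def by (rule derivative_eq_intros) (auto intro!: derivative_eq_intros ne)
    hence "deriv h \<zeta> = (deriv f \<zeta> * (1 - \<zeta>) - f \<zeta> * (- 1)) / ((1 - \<zeta>) * (1 - \<zeta>))"
      by (rule DERIV_imp_deriv)
    also have "\<dots> = deriv f \<zeta> / (1 - \<zeta>) + f \<zeta> / (1 - \<zeta>)^2"
      by (rule quot_aux[OF ne(1)])
    finally show ?thesis .
  qed
  define c where "c = cmod (f 0)"
  define G where "G = (\<lambda>t::real. c * (t / (1 - t * r)) + M / ((a - 1) * r) * ((1 - t * r) powr (- a) - 1 / (1 - t * r)))"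
  define G' where "G' = (\<lambda>t::real. M * (1 - t * r) powr (- a) / (1 - t * r) +
       (c + M * (((1 - t * r) powr (1 - a) - 1) / (a - 1))) / (1 - t * r)^2)"
  have "norm (integral {0..1} (\<lambda>t. of_real t * deriv h (of_real t * z))) \<le> G 1 - G 0"
  proof (rule norm_integral_le_antideriv)
    have dhc: "deriv h holomorphic_on ball 0 1" by (rule holomorphic_deriv[OF hh]) auto
    have "continuous_on {0..1} (\<lambda>t::real. deriv h (of_real t * z))"
      by (rule continuous_on_compose2[OF holomorphic_on_imp_continuous_on[OF dhc]])
         (use mem in \<open>auto intro!: continuous_intros\<close>)
    hence "continuous_on {0..1} (\<lambda>t::real. of_real t * deriv h (of_real t * z))"
      by (intro continuous_intros) auto
    thus "(\<lambda>t. of_real t * deriv h (of_real t * z)) integrable_on {0..1}"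
      by (rule integrable_continuous_interval)
  next
    fix t :: real assume t: "t \<in> {0..1}"
    define \<zeta> where "\<zeta> = of_real t * z"
    define s where "s = t * r"
    have ns: "cmod \<zeta> = s" using t by (simp add: \<zeta>_def s_def r_def norm_mult)
    have s: "0 \<le> s" "s < 1" using t r unfolding s_def
      by (auto intro: mult_nonneg_nonneg) (smt (verit) mult_left_le_one_le)
    have \<zeta>: "\<zeta> \<in> ball 0 1" using mem[OF t] by (simp add: \<zeta>_def)
    have n1: "1 - s \<le> cmod (1 - \<zeta>)" using norm_triangle_ineq2[of 1 \<zeta>] ns by simp
    have p1: "0 < 1 - s" using s by simp
    have "cmod (of_real t * deriv h \<zeta>) \<le> cmod (deriv h \<zeta>)"
      using t by (simp add: norm_mult mult_left_le_one_le)
    also have "\<dots> \<le> cmod (deriv f \<zeta>) / cmod (1 - \<zeta>) + cmod (f \<zeta>) / cmod (1 - \<zeta>)^2"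
      unfolding dh[OF \<zeta>] by (metis norm_divide norm_power norm_triangle_ineq)
    also have "\<dots> \<le> M * (1 - s) powr (- a) / (1 - s) + (c + M * (((1 - s) powr (1 - a) - 1) / (a - 1))) / (1 - s)^2"
    proof (rule add_mono)
      have "cmod (deriv f \<zeta>) \<le> M * (1 - s) powr (- a)"
        using deriv_pt_bound[OF a B \<zeta>] ns by simp
      moreover have "0 \<le> M * (1 - s) powr (- a)" using calculation norm_ge_zero order_trans by blast
      ultimately show "cmod (deriv f \<zeta>) / cmod (1 - \<zeta>) \<le> M * (1 - s) powr (- a) / (1 - s)"
        using n1 p1 by (intro frac_le) auto
    next
      have "cmod (f \<zeta>) \<le> c + M * (((1 - s) powr (1 - a) - 1) / (a - 1))"
        using f_pt_bound[OF hol a B \<zeta>] ns by (simp add: c_def)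
      moreover have "0 \<le> c + M * (((1 - s) powr (1 - a) - 1) / (a - 1))" using calculation norm_ge_zero order_trans by blast
      moreover have "(1 - s)^2 \<le> cmod (1 - \<zeta>)^2" using n1 p1 by (intro power_mono) auto
      ultimately show "cmod (f \<zeta>) / cmod (1 - \<zeta>)^2 \<le> (c + M * (((1 - s) powr (1 - a) - 1) / (a - 1))) / (1 - s)^2"
        using p1 by (intro frac_le) auto
    qed
    finally show "cmod (of_real t * deriv h (of_real t * z)) \<le> G' t"
      by (simp add: G'_def \<zeta>_def s_def)
  next
    fix t :: real assume t: "t \<in> {0..1}"
    have pos: "0 < 1 - t * r" using t r by (smt (verit) mult_left_le_one_le atLeastAtMost_iff)
    define u where "u = 1 - t * r"
    have u: "u > 0" using pos u_def by simp
    have du: "((\<lambda>t. 1 - t * r) has_real_derivative - r) (at t within {0..1})"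
      by (auto intro!: derivative_eq_intros)
    have "((\<lambda>x. x powr (- a)) has_real_derivative (- a) * u powr (- a - 1)) (at u)"
      by (rule has_real_derivative_powr[OF u])
    hence d1: "((\<lambda>t. (1 - t * r) powr (- a)) has_real_derivative (- a) * u powr (- a - 1) * - r) (at t within {0..1})"
      unfolding u_def by (rule DERIV_chain2[OF _ du])
    have did: "((\<lambda>t. t) has_real_derivative 1) (at t within {0..1})" by (rule DERIV_ident)
    have dc: "((\<lambda>t. 1) has_real_derivative 0) (at t within {0..1})" by (rule DERIV_const)
    have d2': "((\<lambda>t. t / (1 - t * r)) has_real_derivative (1 * (1 - t * r) - (- r) * t) / ((1 - t * r) ^ Suc (Suc 0))) (at t within {0..1})"
      by (rule DERIV_quotient[OF did du]) (use pos in simp)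
    have d2: "((\<lambda>t. t / (1 - t * r)) has_real_derivative 1 / u^2) (at t within {0..1})"
    proof -
      have e: "(1 * (1 - t * r) - (- r) * t) / ((1 - t * r) ^ Suc (Suc 0)) = 1 / u^2"
        unfolding u_def by (simp add: algebra_simps power2_eq_square)
      show ?thesis using d2' by (simp only: e)
    qed
    have d3': "((\<lambda>t. 1 / (1 - t * r)) has_real_derivative (0 * (1 - t * r) - (- r) * 1) / ((1 - t * r) ^ Suc (Suc 0))) (at t within {0..1})"
      by (rule DERIV_quotient[OF dc du]) (use pos in simp)
    have d3: "((\<lambda>t. 1 / (1 - t * r)) has_real_derivative r / u^2) (at t within {0..1})"
    proof -
      have e: "(0 * (1 - t * r) - (- r) * 1) / ((1 - t * r) ^ Suc (Suc 0)) = r / u^2"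
        unfolding u_def by (simp add: power2_eq_square)
      show ?thesis using d3' by (simp only: e)
    qed
    have "(G has_real_derivative c * (1 / u^2) + M / ((a - 1) * r) * ((- a) * u powr (- a - 1) * - r - r / u^2)) (at t within {0..1})"
      unfolding G_def by (intro DERIV_add DERIV_cmult DERIV_diff d1 d2 d3)
    moreover have "c * (1 / u^2) + M / ((a - 1) * r) * ((- a) * u powr (- a - 1) * - r - r / u^2) = G' t"
    proof -
      have e1: "u powr (- a - 1) = u powr (- a) / u" using u by (simp add: powr_diff)
      have e2: "u powr (1 - a) = u * u powr (- a)" using u powr_mult_base[of u "- a"]
        by simp
      show ?thesis unfolding G'_def u_def[symmetric] e1 e2 using u r a
        by (simp add: field_simps power2_eq_square)
    qed
    ultimately show "(G has_real_derivative G' t) (at t within {0..1})" by simp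
  qed
  hence I: "cmod (deriv (cesaro f) z) \<le> G 1 - G 0" by (simp only: dC)
  have G0: "G 0 = 0" by (simp add: G_def)
  have pr: "0 < 1 - r" using r by simp
  have "(1 - r\<^sup>2) powr a = (1 + r) powr a * (1 - r) powr a"
    by (simp add: powr_mult[symmetric] power2_eq_square algebra_simps)
  hence "(1 - r\<^sup>2) powr a * (G 1 - G 0) =
        (1 + r) powr a * (1 - r) powr a * (c / (1 - r) + M / ((a - 1) * r) * ((1 - r) powr (- a) - 1 / (1 - r)))"
    by (simp add: G_def G0)
  also have "\<dots> = c * ((1 + r) powr a * (1 - r) powr (a - 1)) +
     M * ((1 + r) powr a * (1 - (1 - r) powr (a - 1)) / ((a - 1) * r))"
  proof -
    have e1: "(1 - r) powr (a - 1) = (1 - r) powr a / (1 - r)" using pr by (simp add: powr_diff)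
    have e2: "(1 - r) powr (- a) = 1 / (1 - r) powr a" by (simp add: powr_minus_divide)
    have p: "(1 - r) powr a > 0" using pr by simp
    show ?thesis unfolding e1 e2 by (rule alg_aux) (use pr p r a in auto)
  qed
  finally have eq: "(1 - r\<^sup>2) powr a * (G 1 - G 0) = c * ((1 + r) powr a * (1 - r) powr (a - 1)) +
     M * ((1 + r) powr a * (1 - (1 - r) powr (a - 1)) / ((a - 1) * r))" .
  have "(1 - r\<^sup>2) powr a * cmod (deriv (cesaro f) z) \<le> (1 - r\<^sup>2) powr a * (G 1 - G 0)"
    using I by (intro mult_left_mono) auto
  thus ?thesis using eq by (simp add: r_def c_def)
qed


lemma main_bound:
  fixes a A :: real and f :: "complex \<Rightarrow> complex"
  assumes a: "a > 1"
    and A: "A = 1 + (2 / (2*a - 1)) powr (2*a - 1) * a powr a * (a - 1) powr (a - 1)"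
    and fB: "f \<in> bloch_space a" and fn: "bloch_norm a f \<le> 1"
  shows "cesaro f \<in> bloch_space a \<and> bloch_norm a (cesaro f) \<le> max A (Bc a)"
proof -
  have hol: "f holomorphic_on ball 0 1" and bdd: "bdd_above ((\<lambda>z. (1 - (cmod z)\<^sup>2) powr a * cmod (deriv f z)) ` ball 0 1)"
    using fB by (auto simp: bloch_space_def)
  define M where "M = (SUP z\<in>ball 0 1. (1 - (cmod z)\<^sup>2) powr a * cmod (deriv f z))"
  have B: "(1 - (cmod w)\<^sup>2) powr a * cmod (deriv f w) \<le> M" if "w \<in> ball 0 1" for w
    unfolding M_def by (rule cSUP_upper[OF that bdd])
  have M0: "0 \<le> M" using B[of 0] by (smt (verit) centre_in_ball mult_nonneg_nonneg norm_ge_zero powr_ge_zero zero_less_one)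
  have nf: "cmod (f 0) + M \<le> 1" using fn by (simp add: bloch_norm_def M_def)
  define K where "K = cmod (f 0) * (A - 1) + M * Bc a"
  have cd: "(cesaro f has_field_derivative
           integral {0..1} (\<lambda>t. of_real t * deriv (\<lambda>w. f w / (1 - w)) (of_real t * z))) (at z)"
    if "z \<in> ball 0 1" for z
    by (rule cesaro_has_deriv[OF hol that])
  have holC: "cesaro f holomorphic_on ball 0 1"
    unfolding holomorphic_on_def field_differentiable_def
    using cd by (blast intro: has_field_derivative_at_within)
  define \<Phi> where "\<Phi> = (\<lambda>z. (1 - (cmod z)\<^sup>2) powr a * cmod (deriv (cesaro f) z))"
  have nz: "\<Phi> z \<le> K" if z: "z \<in> ball 0 1" "z \<noteq> 0" for z
  proof -
    have r: "0 < cmod z" "cmod z < 1" using z by auto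
    have "\<Phi> z \<le> cmod (f 0) * ((1 + cmod z) powr a * (1 - cmod z) powr (a - 1)) +
     M * ((1 + cmod z) powr a * (1 - (1 - cmod z) powr (a - 1)) / ((a - 1) * cmod z))"
      unfolding \<Phi>_def by (rule cesaro_deriv_pt[OF hol a B z])
    also have "\<dots> \<le> cmod (f 0) * (A - 1) + M * Bc a"
    proof (rule add_mono)
      show "cmod (f 0) * ((1 + cmod z) powr a * (1 - cmod z) powr (a - 1)) \<le> cmod (f 0) * (A - 1)"
        using amgm_bound[OF a, of "cmod z"] r A by (intro mult_left_mono) auto
      show "M * ((1 + cmod z) powr a * (1 - (1 - cmod z) powr (a - 1)) / ((a - 1) * cmod z)) \<le> M * Bc a"
        using Q_bound[OF a r] M0 by (intro mult_left_mono) auto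
    qed
    finally show ?thesis by (simp add: K_def)
  qed
  have allz: "\<Phi> z \<le> K" if z: "z \<in> ball 0 1" for z
  proof (cases "z = 0")
    case False thus ?thesis using nz z by auto
  next
    case True
    have dC: "deriv (cesaro f) holomorphic_on ball 0 1" by (rule holomorphic_deriv[OF holC]) auto
    have cont: "continuous_on (ball 0 1) \<Phi>"
    proof -
      have c1: "continuous_on (ball 0 1) (\<lambda>z. cmod (deriv (cesaro f) z))"
        by (intro continuous_intros holomorphic_on_imp_continuous_on[OF dC])
      have c2: "continuous_on (ball 0 1) (\<lambda>z::complex. (1 - (cmod z)\<^sup>2) powr a)"
      proof (rule continuous_on_powr)
        show "\<forall>x\<in>ball 0 1. 1 - (cmod (x::complex))\<^sup>2 \<noteq> 0"
        proof
          fix x :: complex assume "x \<in> ball 0 1"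
          hence "cmod x < 1" by simp
          hence "(cmod x)\<^sup>2 < 1" by (simp add: power_less_one_iff abs_square_less_1)
          thus "1 - (cmod x)\<^sup>2 \<noteq> 0" by simp
        qed
      qed (auto intro!: continuous_intros)
      show ?thesis unfolding \<Phi>_def by (rule continuous_on_mult[OF c2 c1])
    qed
    hence "isCont \<Phi> 0" using continuous_on_eq_continuous_at[of "ball 0 1" \<Phi>] by auto
    hence lim: "(\<Phi> \<longlongrightarrow> \<Phi> 0) (at 0)" by (simp add: isCont_def)
    have ev: "eventually (\<lambda>z. \<Phi> z \<le> K) (at 0)"
      unfolding eventually_at by (rule exI[of _ 1]) (auto intro!: nz simp: dist_norm)
    have "\<Phi> 0 \<le> K" by (rule tendsto_upperbound[OF lim ev]) simp
    thus ?thesis using True by simp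
  qed
  have bddC: "bdd_above ((\<lambda>z. (1 - (cmod z)\<^sup>2) powr a * cmod (deriv (cesaro f) z)) ` ball 0 1)"
    by (rule bdd_aboveI2[where M=K]) (use allz in \<open>auto simp: \<Phi>_def\<close>)
  have inC: "cesaro f \<in> bloch_space a" using holC bddC by (simp add: bloch_space_def)
  have C0: "cesaro f 0 = f 0" by (simp add: cesaro_def)
  have "(SUP z\<in>ball 0 1. (1 - (cmod z)\<^sup>2) powr a * cmod (deriv (cesaro f) z)) \<le> K"
    by (rule cSUP_least) (use allz in \<open>auto simp: \<Phi>_def\<close>)
  hence "bloch_norm a (cesaro f) \<le> cmod (f 0) + K" by (simp add: bloch_norm_def C0)
  also have "cmod (f 0) + K = cmod (f 0) * A + M * Bc a" by (simp add: K_def algebra_simps)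
  also have "\<dots> \<le> cmod (f 0) * max A (Bc a) + M * max A (Bc a)"
    using M0 by (intro add_mono mult_left_mono) auto
  also have "\<dots> = (cmod (f 0) + M) * max A (Bc a)" by (simp add: algebra_simps)
  also have "\<dots> \<le> 1 * max A (Bc a)"
  proof (rule mult_right_mono[OF nf])
    have "0 \<le> (2 / (2*a - 1)) powr (2*a - 1) * a powr a * (a - 1) powr (a - 1)" by simp
    hence "A \<ge> 1" using A by simp
    thus "0 \<le> max A (Bc a)" by simp
  qed
  finally show ?thesis using inC by simp
qed

theorem theorem6p2:
  fixes \<alpha> A :: real
  assumes "\<alpha> > 1"
    and "A = 1 + (2 / (2*\<alpha> - 1)) powr (2*\<alpha> - 1) * \<alpha> powr \<alpha> * (\<alpha> - 1) powr (\<alpha> - 1)"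
  shows "cesaro_bloch_opnorm \<alpha> \<le>
    ereal (if \<alpha> \<le> 2 then max A (2 powr \<alpha> / (\<alpha> - 1))
           else max A (2 powr \<alpha> * (2 powr \<alpha> - \<alpha> - 1) / (\<alpha> - 1)\<^sup>2))"
proof -
  have R: "(if \<alpha> \<le> 2 then max A (2 powr \<alpha> / (\<alpha> - 1))
           else max A (2 powr \<alpha> * (2 powr \<alpha> - \<alpha> - 1) / (\<alpha> - 1)\<^sup>2)) = max A (Bc \<alpha>)"
    by (simp add: Bc_def)
  show ?thesis unfolding cesaro_bloch_opnorm_def R
  proof (rule SUP_least)
    fix f assume "f \<in> {f \<in> bloch_space \<alpha>. bloch_norm \<alpha> f \<le> 1}"
    hence c: "cesaro f \<in> bloch_space \<alpha>" and n: "bloch_norm \<alpha> (cesaro f) \<le> max A (Bc \<alpha>)"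
      using main_bound[OF assms] by auto
    show "(if cesaro f \<in> bloch_space \<alpha> then ereal (bloch_norm \<alpha> (cesaro f)) else \<infinity>) \<le> ereal (max A (Bc \<alpha>))"
      by (simp only: c n if_True ereal_less_eq(3))
  qed
qed

end
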